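(* Let $1\le p<\infty$, $\alpha>0$, $m>0$, and assume that the differentiation operator $Df=f'$ is bounded on $\mathcal{F}^p_{(\alpha,m)}$. Then the following are equivalent: (i) $D$ is power bounded and uniformly mean ergodic on $\mathcal{F}^p_{(\alpha,m)}$; (ii) either $m<1$, or $m=1$ and $\alpha<1$.
   Context: For $\alpha>0$, $m>0$ and $1\le p<\infty$, $\mathcal{F}^p_{(\alpha,m)}$ denotes the Banach space of entire functions $f$ on $\mathbb{C}$ with $\|f\|_{(p,\alpha,m)}^p=\int_{\mathbb{C}}|f(z)|^pe^{-p\alpha|z|^m}\,dA(z)<\infty$, where $dA$ is Lebesgue area measure. A bounded operator $T$ on a Banach space is power bounded if $\sup_{n\ge0}\|T^n\|<\infty$, and uniformly mean ergodic if the Cesàro means $\frac1n\sum_{k=1}^nT^k$ converge in operator norm as $n\to\infty$. *)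

theory Defs
  imports "HOL-Analysis.Analysis"
begin

definition fock_integral :: "real \<Rightarrow> real \<Rightarrow> real \<Rightarrow> (complex \<Rightarrow> complex) \<Rightarrow> ennreal" where
  "fock_integral p \<alpha> m f =
     (\<integral>\<^sup>+ z. ennreal (norm (f z) powr p * exp (- p * \<alpha> * norm z powr m)) \<partial>lborel)"

definition fock_space :: "real \<Rightarrow> real \<Rightarrow> real \<Rightarrow> (complex \<Rightarrow> complex) set" where
  "fock_space p \<alpha> m = {f. f holomorphic_on UNIV \<and> fock_integral p \<alpha> m f < \<infinity>}"

definition fock_norm :: "real \<Rightarrow> real \<Rightarrow> real \<Rightarrow> (complex \<Rightarrow> complex) \<Rightarrow> real" where
  "fock_norm p \<alpha> m f = enn2real (fock_integral p \<alpha> m f) powr (1 / p)"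

definition Dop :: "(complex \<Rightarrow> complex) \<Rightarrow> (complex \<Rightarrow> complex)" where
  "Dop f = deriv f"

definition D_bounded :: "real \<Rightarrow> real \<Rightarrow> real \<Rightarrow> bool" where
  "D_bounded p \<alpha> m \<longleftrightarrow>
     (\<forall>f \<in> fock_space p \<alpha> m. Dop f \<in> fock_space p \<alpha> m) \<and>
     (\<exists>C. \<forall>f \<in> fock_space p \<alpha> m. fock_norm p \<alpha> m (Dop f) \<le> C * fock_norm p \<alpha> m f)"

definition D_power_bounded :: "real \<Rightarrow> real \<Rightarrow> real \<Rightarrow> bool" where
  "D_power_bounded p \<alpha> m \<longleftrightarrow>
     (\<exists>C. \<forall>n. \<forall>f \<in> fock_space p \<alpha> m.
        fock_norm p \<alpha> m ((Dop ^^ n) f) \<le> C * fock_norm p \<alpha> m f)"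

definition cesaro_D :: "nat \<Rightarrow> (complex \<Rightarrow> complex) \<Rightarrow> (complex \<Rightarrow> complex)" where
  "cesaro_D n f = (\<lambda>z. (1 / of_nat n) * (\<Sum>k = 1..n. (Dop ^^ k) f z))"

definition D_uniformly_mean_ergodic :: "real \<Rightarrow> real \<Rightarrow> real \<Rightarrow> bool" where
  "D_uniformly_mean_ergodic p \<alpha> m \<longleftrightarrow>
     (\<exists>P. (\<forall>f \<in> fock_space p \<alpha> m. P f \<in> fock_space p \<alpha> m) \<and>
       (\<forall>\<epsilon>>0. \<forall>\<^sub>F n in sequentially. \<forall>f \<in> fock_space p \<alpha> m.
          fock_norm p \<alpha> m (\<lambda>z. cesaro_D n f z - P f z) \<le> \<epsilon> * fock_norm p \<alpha> m f))"

end

theory Submission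
  imports Defs "HOL-Complex_Analysis.Complex_Analysis"
begin


lemma cauchy_avg:
  fixes f :: "complex \<Rightarrow> complex"
  assumes hol: "f holomorphic_on UNIV" and R: "R > 0"
  shows "norm ((deriv ^^ k) f z) \<le> fact k / R^k * integral {0..1} (\<lambda>t. norm (f (z + R * exp (2 * of_real pi * \<i> * of_real t))))"
proof -
  have "((\<lambda>u. f u / (u-z) ^ (Suc k)) has_contour_integral ((2 * pi * \<i>) / (fact k) * (deriv ^^ k) f z)) (circlepath z R)"
    by (rule Cauchy_has_contour_integral_higher_derivative_circlepath)
       (use hol R continuous_on_subset[OF holomorphic_on_imp_continuous_on[OF hol]] in \<open>auto elim: holomorphic_on_subset\<close>)
  then have hi: "((\<lambda>x. f (circlepath z R x) / (circlepath z R x - z) ^ Suc k * vector_derivative (circlepath z R) (at x within {0..1}))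
      has_integral ((2 * pi * \<i>) / (fact k) * (deriv ^^ k) f z)) {0..1}"
    by (simp add: has_contour_integral_def)
  define g where "g t = norm (f (z + R * exp (2 * of_real pi * \<i> * of_real t)))" for t :: real
  have contg: "continuous_on {0..1} g"
    unfolding g_def using hol
    by (intro continuous_intros continuous_on_compose2[OF holomorphic_on_imp_continuous_on[OF hol]]) auto
  have gi: "g integrable_on {0..1}" using contg integrable_continuous_interval by blast
  have "norm ((2 * pi * \<i>) / (fact k) * (deriv ^^ k) f z) \<le> integral {0..1} (\<lambda>t. 2 * pi / R^k * g t)"
    unfolding integral_unique[OF hi, symmetric]
  proof (rule integral_norm_bound_integral[OF has_integral_integrable[OF hi]])
    show "(\<lambda>t. 2 * pi / R ^ k * g t) integrable_on {0..1}" using integrable_on_cmult_left[OF gi, of "2 * pi / R^k"] by (simp add: mult.assoc)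
    fix x :: real assume x: "x \<in> {0..1}"
    define E where "E = exp (2 * of_real pi * \<i> * of_real x)"
    have nE: "norm E = 1" by (simp add: E_def norm_exp)
    have "f (circlepath z R x) / (circlepath z R x - z) ^ Suc k * vector_derivative (circlepath z R) (at x within {0..1})
        = f (z + R * E) / (R * E) ^ Suc k * (2 * pi * \<i> * R * E)"
    proof -
      have vd: "vector_derivative (circlepath z R) (at x within {0..1}) = 2 * pi * \<i> * R * E"
        using x by (simp add: vector_derivative_circlepath01 E_def)
      have cp: "circlepath z R x = z + R * E" by (simp add: circlepath E_def)
      show ?thesis unfolding vd cp by simp
    qed
    also have "norm \<dots> = 2 * pi / R ^ k * g x"
    proof -
      have gx: "g x = norm (f (z + R * E))" by (simp add: g_def E_def)
      have "E \<noteq> 0" using nE by auto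
      then show ?thesis
        using R nE unfolding gx by (simp add: norm_mult norm_divide norm_power field_simps)
    qed
    finally show "norm (f (circlepath z R x) / (circlepath z R x - z) ^ Suc k * vector_derivative (circlepath z R) (at x within {0..1})) \<le> 2 * pi / R ^ k * g x"
      by simp
  qed
  also have "\<dots> = 2 * pi / R^k * integral {0..1} g" by simp
  finally have "2 * pi / fact k * norm ((deriv ^^ k) f z) \<le> 2 * pi / R^k * integral {0..1} g"
    by (simp add: norm_mult norm_divide)
  then have "norm ((deriv ^^ k) f z) \<le> fact k / R^k * integral {0..1} g"
    using R by (simp add: field_simps)
  moreover have "g = (\<lambda>t. norm (f (z + R * exp (2 * of_real pi * \<i> * of_real t))))"
    by (rule ext) (simp add: g_def)
  ultimately show ?thesis by simp
qed



lemma powr_tangent: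
  fixes a x p :: real
  assumes a: "a > 0" and x: "x \<ge> 0" and p: "p \<ge> 1"
  shows "a powr p + p * a powr (p - 1) * (x - a) \<le> x powr p"
proof (cases "x = 0")
  case True
  have e: "a powr (p - 1) * a = a powr p" using a by (simp add: powr_diff)
  have "p * a powr (p - 1) * (x - a) = - p * (a powr (p - 1) * a)" using True by (simp add: algebra_simps)
  also have "\<dots> = - p * a powr p" by (simp only: e)
  finally have eq: "p * a powr (p - 1) * (x - a) = - p * a powr p" .
  have "a powr p \<le> p * a powr p" using p a by (simp add: mult_le_cancel_right1)
  moreover have "x powr p = 0" using True by simp
  ultimately show ?thesis using eq by linarith
next
  case False
  then have xp: "x > 0" using x by simp
  have "p * a powr (p - 1) * (x - a) \<le> x powr p - a powr p"
  proof (rule convex_on_imp_above_tangent[where A = "{0<..}"])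
    show "convex_on {0<..} (\<lambda>x. x powr p)" using powr_convex[OF p] .
    show "connected ({0<..} :: real set)" by simp
    show "a \<in> interior {0<..}" using a by (simp add: interior_open)
    show "x \<in> {0<..}" using xp by simp
    show "((\<lambda>x. x powr p) has_field_derivative p * a powr (p - 1)) (at a within {0<..})"
      using a by (auto intro!: derivative_eq_intros)
  qed
  then show ?thesis by simp
qed

lemma jensen01:
  fixes g :: "real \<Rightarrow> real"
  assumes cg: "continuous_on {0..1} g" and g0: "\<And>t. t \<in> {0..1} \<Longrightarrow> g t \<ge> 0" and p: "p \<ge> 1"
  shows "(integral {0..1} g) powr p \<le> integral {0..1} (\<lambda>t. g t powr p)"
proof -
  define a where "a = integral {0..1} g"
  have gi: "g integrable_on {0..1}" using cg integrable_continuous_interval by blast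
  have cgp: "continuous_on {0..1} (\<lambda>t. g t powr p)"
    using cg g0 p by (intro continuous_on_powr') auto
  have gpi: "(\<lambda>t. g t powr p) integrable_on {0..1}" using cgp integrable_continuous_interval by blast
  have gai: "(\<lambda>t. g t - a) integrable_on {0..1}"
    using gi by (intro integrable_diff) auto
  have gai2: "(\<lambda>t. p * a powr (p - 1) * (g t - a)) integrable_on {0..1}"
    using integrable_on_cmult_left[OF gai, of "p * a powr (p - 1)"] by simp
  have a0: "a \<ge> 0" unfolding a_def using g0 by (intro integral_nonneg[OF gi]) auto
  show ?thesis
  proof (cases "a = 0")
    case True
    then show ?thesis using p unfolding a_def[symmetric]
      by (simp add: integral_nonneg[OF gpi])
  next
    case False
    then have ap: "a > 0" using a0 by simp
    have "integral {0..1} (\<lambda>t. a powr p + p * a powr (p - 1) * (g t - a)) \<le> integral {0..1} (\<lambda>t. g t powr p)"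
      by (rule integral_le)
        (use gai2 gpi powr_tangent[OF ap _ p] g0 in \<open>auto intro!: integrable_add\<close>)
    moreover have "integral {0..1} (\<lambda>t. a powr p + p * a powr (p - 1) * (g t - a)) = a powr p"
    proof -
      have i1: "((\<lambda>t. a powr p) has_integral a powr p) {0..1::real}"
        using has_integral_const_real[of "a powr p" 0 1] by simp
      have i0: "(g has_integral a) {0..1}" unfolding a_def using gi by (rule integrable_integral)
      have i3: "((\<lambda>t. a) has_integral a) {0..1::real}"
        using has_integral_const_real[of a 0 1] by simp
      have i2: "((\<lambda>t. p * a powr (p - 1) * (g t - a)) has_integral p * a powr (p - 1) * (a - a)) {0..1}"
        by (intro has_integral_mult_right has_integral_diff i0 i3)
      have "((\<lambda>t. a powr p + p * a powr (p - 1) * (g t - a)) has_integral a powr p + p * a powr (p - 1) * (a - a)) {0..1}"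
        by (intro has_integral_add i1 i2)
      then show ?thesis by (simp add: integral_unique)
    qed
    ultimately show ?thesis by (simp add: a_def)
  qed
qed



lemma powr_subadd:
  fixes a b m :: real
  assumes a: "a \<ge> 0" and b: "b \<ge> 0" and m: "0 < m" "m \<le> 1"
  shows "(a + b) powr m \<le> a powr m + b powr m"
proof (cases "a + b = 0")
  case True
  then show ?thesis using a b by simp
next
  case False
  then have s: "a + b > 0" using a b by simp
  have ha: "a / (a + b) \<le> (a / (a + b)) powr m"
    using powr_mono'[of m 1 "a / (a+b)"] m a b s by simp
  have hb: "b / (a + b) \<le> (b / (a + b)) powr m"
    using powr_mono'[of m 1 "b / (a+b)"] m a b s by simp
  have "a / (a + b) + b / (a + b) = (a + b) / (a + b)" by (rule add_divide_distrib[symmetric])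
  then have "1 = a / (a + b) + b / (a + b)" using s by simp
  also have "\<dots> \<le> (a powr m + b powr m) / (a + b) powr m"
    using ha hb a b s by (simp add: powr_divide add_divide_distrib)
  finally show ?thesis using s by (simp add: field_simps)
qed

lemma pw_bound:
  fixes f :: "complex \<Rightarrow> complex"
  assumes hol: "f holomorphic_on UNIV" and R: "R > 0" and p: "p \<ge> 1"
  shows "ennreal (norm ((deriv ^^ k) f z) powr p) \<le> ennreal ((fact k / R^k) powr p) *
     (\<integral>\<^sup>+ t. ennreal (norm (f (z + R * exp (2 * of_real pi * \<i> * of_real t))) powr p) * indicator {0..1} t \<partial>lborel)"
proof -
  define g where "g t = norm (f (z + R * exp (2 * of_real pi * \<i> * of_real t)))" for t :: real
  have geq: "(\<lambda>t. norm (f (z + R * exp (2 * of_real pi * \<i> * of_real t)))) = g"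
    by (rule ext) (simp add: g_def)
  have contg: "continuous_on {0..1} g"
    unfolding g_def using hol
    by (intro continuous_intros continuous_on_compose2[OF holomorphic_on_imp_continuous_on[OF hol]]) auto
  have cgp: "continuous_on {0..1} (\<lambda>t. g t powr p)"
    using contg p by (intro continuous_on_powr') (auto simp: g_def)
  have gpi: "(\<lambda>t. g t powr p) integrable_on {0..1}" using cgp integrable_continuous_interval by blast
  have c0: "fact k / R^k \<ge> (0::real)" using R by simp
  have "norm ((deriv ^^ k) f z) \<le> fact k / R^k * integral {0..1} g"
    using cauchy_avg[OF hol R, of k z] geq by simp
  then have "norm ((deriv ^^ k) f z) powr p \<le> (fact k / R^k * integral {0..1} g) powr p"
    using p by (intro powr_mono2) auto
  also have "\<dots> = (fact k / R^k) powr p * (integral {0..1} g) powr p"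
  proof -
    have "integral {0..1} g \<ge> 0"
      by (rule integral_nonneg[OF integrable_continuous_interval[OF contg]]) (simp add: g_def)
    then show ?thesis using c0 by (simp only: powr_mult)
  qed
  also have "\<dots> \<le> (fact k / R^k) powr p * integral {0..1} (\<lambda>t. g t powr p)"
    by (intro mult_left_mono jensen01[OF contg _ p]) (auto simp: g_def)
  finally have le: "norm ((deriv ^^ k) f z) powr p \<le> (fact k / R^k) powr p * integral {0..1} (\<lambda>t. g t powr p)" .
  have nn: "(\<integral>\<^sup>+ t. ennreal (g t powr p) * indicator {0..1} t \<partial>lborel) = ennreal (integral {0..1} (\<lambda>t. g t powr p))"
    by (rule nn_integral_has_integral_lebesgue') (use gpi in auto)
  have "ennreal (norm ((deriv ^^ k) f z) powr p) \<le> ennreal ((fact k / R^k) powr p * integral {0..1} (\<lambda>t. g t powr p))"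
    using le by (rule ennreal_leI)
  also have "\<dots> = ennreal ((fact k / R^k) powr p) * ennreal (integral {0..1} (\<lambda>t. g t powr p))"
    by (rule ennreal_mult) (auto intro: integral_nonneg[OF gpi])
  finally show ?thesis unfolding nn[symmetric] by (simp add: g_def)
qed



lemma nn_integral_translate:
  fixes H :: "complex \<Rightarrow> ennreal"
  assumes [measurable]: "H \<in> borel_measurable borel"
  shows "(\<integral>\<^sup>+ z. H (z + c) \<partial>lborel) = (\<integral>\<^sup>+ z. H z \<partial>lborel)"
proof -
  have "(\<integral>\<^sup>+ z. H z \<partial>lborel) = (\<integral>\<^sup>+ z. H z \<partial>(distr lborel borel ((+) c)))"
    by (simp add: lborel_distr_plus)
  also have "\<dots> = (\<integral>\<^sup>+ z. H (c + z) \<partial>lborel)"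
    by (rule nn_integral_distr) auto
  finally show ?thesis by (simp add: add.commute)
qed

lemma cont_weighted:
  fixes f :: "complex \<Rightarrow> complex"
  assumes cf: "continuous_on UNIV f" and p: "p > 0" and m: "m > 0"
  shows "continuous_on UNIV (\<lambda>z. norm (f z) powr p * exp (- p * \<alpha> * norm z powr m))"
  by (intro continuous_intros continuous_on_powr' cf) (use p m in auto)

lemma meas_weighted:
  fixes f :: "complex \<Rightarrow> complex"
  assumes cf: "continuous_on UNIV f" and p: "p > 0" and m: "m > 0"
  shows "(\<lambda>z. ennreal (norm (f z) powr p * exp (- p * \<alpha> * norm z powr m))) \<in> borel_measurable borel"
  using borel_measurable_continuous_onI[OF cont_weighted[OF cf p m, of \<alpha>]] by measurable



lemma fock_deriv_bound:
  fixes f :: "complex \<Rightarrow> complex"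
  assumes hol: "f holomorphic_on UNIV" and R: "R > 0" and p: "p \<ge> 1" and a: "\<alpha> > 0"
    and m: "0 < m" "m \<le> 1"
  shows "fock_integral p \<alpha> m ((deriv ^^ k) f) \<le>
     ennreal ((fact k / R^k) powr p * exp (p * \<alpha> * R powr m)) * fock_integral p \<alpha> m f"
proof -
  define e where "e t = of_real R * exp (2 * of_real pi * \<i> * of_real t)" for t :: real
  define w where "w z = exp (- p * \<alpha> * norm z powr m)" for z :: complex
  define C where "C = ennreal ((fact k / R^k) powr p)"
  define E where "E = exp (p * \<alpha> * R powr m)"
  define H where "H z = ennreal (norm (f z) powr p * w z)" for z
  have cf: "continuous_on UNIV f" using hol holomorphic_on_imp_continuous_on by blast
  have Hm[measurable]: "H \<in> borel_measurable borel"
    unfolding H_def w_def using meas_weighted[OF cf _ m(1)] p by simp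
  have ne: "norm (e t) = R" for t using R by (simp add: e_def norm_mult norm_exp)
  have wle: "w z \<le> E * w (z + e t)" for z t
  proof -
    have "norm (z + e t) \<le> norm z + R" using norm_triangle_ineq[of z "e t"] ne by simp
    then have "norm (z + e t) powr m \<le> (norm z + R) powr m" using m by (intro powr_mono2) auto
    also have "\<dots> \<le> norm z powr m + R powr m" using m R by (intro powr_subadd) auto
    finally have "p * \<alpha> * norm (z + e t) powr m \<le> p * \<alpha> * (norm z powr m + R powr m)"
      using p a by (intro mult_left_mono) auto
    then have "- p * \<alpha> * norm z powr m \<le> p * \<alpha> * R powr m + (- p * \<alpha> * norm (z + e t) powr m)"
      by (simp add: algebra_simps)
    then show ?thesis unfolding w_def E_def by (simp add: exp_add[symmetric])
  qed
  define F where "F z t = H (z + e t) * indicator {0..1::real} t" for z t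
  have contP: "continuous_on UNIV (\<lambda>x::complex \<times> real. fst x + e (snd x))"
    unfolding e_def by (intro continuous_intros)
  have Fm: "case_prod F \<in> borel_measurable (lborel \<Otimes>\<^sub>M lborel)"
  proof -
    have "(\<lambda>x::complex \<times> real. fst x + e (snd x)) \<in> borel_measurable borel"
      using borel_measurable_continuous_onI[OF contP] .
    moreover have "(\<lambda>x::complex \<times> real. snd x) \<in> borel_measurable borel"
      by (intro borel_measurable_continuous_onI continuous_intros)
    ultimately have "(\<lambda>x::complex \<times> real. H (fst x + e (snd x)) * indicator {0..1::real} (snd x)) \<in> borel_measurable borel"
      by measurable
    then show ?thesis unfolding lborel_prod measurable_lborel1 F_def by (simp add: case_prod_beta')
  qed
  have "fock_integral p \<alpha> m ((deriv ^^ k) f) = (\<integral>\<^sup>+ z. ennreal (norm ((deriv ^^ k) f z) powr p) * ennreal (w z) \<partial>lborel)"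
    unfolding fock_integral_def w_def by (intro nn_integral_cong) (simp add: ennreal_mult)
  also have "\<dots> \<le> (\<integral>\<^sup>+ z. C * (\<integral>\<^sup>+ t. ennreal (norm (f (z + e t)) powr p) * indicator {0..1} t \<partial>lborel) * ennreal (w z) \<partial>lborel)"
    unfolding C_def e_def
    by (intro nn_integral_mono mult_right_mono pw_bound[OF hol R p]) auto
  also have "\<dots> = (\<integral>\<^sup>+ z. C * (\<integral>\<^sup>+ t. ennreal (norm (f (z + e t)) powr p) * indicator {0..1} t * ennreal (w z) \<partial>lborel) \<partial>lborel)"
  proof (intro nn_integral_cong)
    fix z
    have ct: "continuous_on UNIV (\<lambda>t. norm (f (z + e t)) powr p)"
      unfolding e_def using p
      by (intro continuous_on_powr' continuous_intros continuous_on_compose2[OF cf]) auto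
    have mt: "(\<lambda>t. ennreal (norm (f (z + e t)) powr p) * indicator {0..1} t) \<in> borel_measurable lborel"
      using borel_measurable_continuous_onI[OF ct] by measurable
    show "C * (\<integral>\<^sup>+ t. ennreal (norm (f (z + e t)) powr p) * indicator {0..1} t \<partial>lborel) * ennreal (w z)
      = C * (\<integral>\<^sup>+ t. ennreal (norm (f (z + e t)) powr p) * indicator {0..1} t * ennreal (w z) \<partial>lborel)"
      using nn_integral_multc[OF mt, of "ennreal (w z)"] by (simp add: mult.assoc)
  qed
  also have "\<dots> \<le> (\<integral>\<^sup>+ z. C * (\<integral>\<^sup>+ t. ennreal E * F z t \<partial>lborel) \<partial>lborel)"
  proof (intro nn_integral_mono mult_left_mono)
    fix z t
    have "ennreal (norm (f (z + e t)) powr p) * ennreal (w z) \<le> ennreal (norm (f (z + e t)) powr p) * ennreal (E * w (z + e t))"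
      by (intro mult_left_mono ennreal_leI wle) auto
    also have "\<dots> = ennreal E * H (z + e t)"
      unfolding H_def by (simp add: ennreal_mult[symmetric] E_def w_def mult_ac)
    finally show "ennreal (norm (f (z + e t)) powr p) * indicator {0..1} t * ennreal (w z) \<le> ennreal E * F z t"
      unfolding F_def by (simp add: mult_ac split: split_indicator)
  qed auto
  also have "\<dots> = C * ennreal E * (\<integral>\<^sup>+ z. (\<integral>\<^sup>+ t. F z t \<partial>lborel) \<partial>lborel)"
  proof -
    have m1: "(\<lambda>z. \<integral>\<^sup>+ t. F z t \<partial>lborel) \<in> borel_measurable lborel"
      using lborel.borel_measurable_nn_integral[OF Fm] by simp
    have "(\<integral>\<^sup>+ z. C * (\<integral>\<^sup>+ t. ennreal E * F z t \<partial>lborel) \<partial>lborel) = (\<integral>\<^sup>+ z. (C * ennreal E) * (\<integral>\<^sup>+ t. F z t \<partial>lborel) \<partial>lborel)"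
    proof (intro nn_integral_cong)
      fix z
      have mz: "F z \<in> borel_measurable lborel" using Fm by (simp add: measurable_Pair2')
      show "C * (\<integral>\<^sup>+ t. ennreal E * F z t \<partial>lborel) = (C * ennreal E) * (\<integral>\<^sup>+ t. F z t \<partial>lborel)"
        using nn_integral_cmult[OF mz, of "ennreal E"] by (simp add: mult.assoc)
    qed
    also have "\<dots> = C * ennreal E * (\<integral>\<^sup>+ z. (\<integral>\<^sup>+ t. F z t \<partial>lborel) \<partial>lborel)"
      by (rule nn_integral_cmult[OF m1])
    finally show ?thesis .
  qed
  also have "(\<integral>\<^sup>+ z. (\<integral>\<^sup>+ t. F z t \<partial>lborel) \<partial>lborel) = (\<integral>\<^sup>+ t. (\<integral>\<^sup>+ z. F z t \<partial>lborel) \<partial>lborel)"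
    by (rule lborel_pair.Fubini'[OF Fm, symmetric])
  also have "\<dots> = (\<integral>\<^sup>+ t. fock_integral p \<alpha> m f * indicator {0..1::real} t \<partial>lborel)"
  proof (intro nn_integral_cong)
    fix t
    have "(\<integral>\<^sup>+ z. F z t \<partial>lborel) = (\<integral>\<^sup>+ z. H (z + e t) \<partial>lborel) * indicator {0..1} t"
      unfolding F_def by (rule nn_integral_multc) measurable
    also have "(\<integral>\<^sup>+ z. H (z + e t) \<partial>lborel) = (\<integral>\<^sup>+ z. H z \<partial>lborel)"
      by (rule nn_integral_translate[OF Hm])
    also have "(\<integral>\<^sup>+ z. H z \<partial>lborel) = fock_integral p \<alpha> m f"
      unfolding fock_integral_def H_def w_def by simp
    finally show "(\<integral>\<^sup>+ z. F z t \<partial>lborel) = fock_integral p \<alpha> m f * indicator {0..1} t" .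
  qed
  also have "\<dots> = fock_integral p \<alpha> m f" by (simp add: nn_integral_cmult_indicator)
  finally show ?thesis unfolding C_def E_def by (simp add: ennreal_mult mult_ac)
qed



lemma fact_exp_bound:
  fixes k :: nat
  assumes "k \<ge> 1"
  shows "fact k * exp (real k) \<le> exp 1 * real k * real k ^ k"
  using assms
proof (induction k rule: dec_induct)
  case base
  then show ?case by simp
next
  case (step k)
  have k: "real k \<ge> 1" using step.hyps by simp
  have lnb: "1 / (real k + 1) \<le> ln (real k + 1) - ln (real k)"
  proof -
    have "ln (real k / (real k + 1)) \<le> real k / (real k + 1) - 1"
      using k by (intro ln_le_minus_one) auto
    moreover have "ln (real k / (real k + 1)) = ln (real k) - ln (real k + 1)"
      using k by (simp add: ln_div)
    moreover have "real k / (real k + 1) - 1 = - 1 / (real k + 1)"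
      using k by (simp add: field_simps)
    ultimately show ?thesis by simp
  qed
  have key: "exp 1 * real k ^ Suc k \<le> (real k + 1) ^ Suc k"
  proof -
    have "1 + real (Suc k) * ln (real k) \<le> real (Suc k) * ln (real k + 1)"
      using lnb k by (simp add: field_simps)
    then have e1: "exp (1 + real (Suc k) * ln (real k)) \<le> exp (real (Suc k) * ln (real k + 1))"
      by simp
    have e2: "exp (1 + real (Suc k) * ln (real k)) = exp 1 * real k ^ Suc k"
    proof -
      have "exp (real (Suc k) * ln (real k)) = exp (ln (real k)) ^ Suc k" by (rule exp_of_nat_mult)
      also have "\<dots> = real k ^ Suc k" using k by simp
      finally show ?thesis by (simp only: exp_add)
    qed
    have e3: "exp (real (Suc k) * ln (real k + 1)) = (real k + 1) ^ Suc k"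
    proof -
      have "exp (real (Suc k) * ln (real k + 1)) = exp (ln (real k + 1)) ^ Suc k" by (rule exp_of_nat_mult)
      also have "\<dots> = (real k + 1) ^ Suc k" using k by simp
      finally show ?thesis .
    qed
    show ?thesis using e1 unfolding e2 e3 .
  qed
  have "fact (Suc k) * exp (real (Suc k)) = (real k + 1) * exp 1 * (fact k * exp (real k))"
    by (simp add: exp_add[symmetric] algebra_simps)
  also have "\<dots> \<le> (real k + 1) * exp 1 * (exp 1 * real k * real k ^ k)"
    using step.IH by (intro mult_left_mono) auto
  also have "\<dots> = (real k + 1) * exp 1 * (exp 1 * real k ^ Suc k)" by simp
  also have "\<dots> \<le> (real k + 1) * exp 1 * (real k + 1) ^ Suc k"
    using key by (intro mult_left_mono) auto
  also have "\<dots> = exp 1 * real (Suc k) * real (Suc k) ^ Suc k" by (simp add: algebra_simps)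
  finally show ?case .
qed

lemma weight_linear_bound:
  fixes \<alpha> m :: real
  assumes a: "\<alpha> > 0" and m: "0 < m" "m \<le> 1" and c: "m < 1 \<or> \<alpha> < 1"
  shows "\<exists>\<beta> K. 0 < \<beta> \<and> \<beta> < 1 \<and> K \<ge> 0 \<and> (\<forall>R\<ge>0. \<alpha> * R powr m \<le> \<beta> * R + K)"
proof (cases "m = 1")
  case True
  with c have "\<alpha> < 1" by simp
  then show ?thesis using a True by (intro exI[of _ \<alpha>] exI[of _ 0]) auto
next
  case False
  with m have m1: "m < 1" by simp
  define R0 where "R0 = (2 * \<alpha>) powr (1 / (1 - m))"
  have R0: "R0 > 0" using a by (simp add: R0_def)
  define K where "K = \<alpha> * R0 powr m"
  have K0: "K \<ge> 0" using a R0 by (simp add: K_def)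
  have main: "\<alpha> * R powr m \<le> 1 / 2 * R + K" if R: "R \<ge> 0" for R :: real
  proof (cases "R \<le> R0")
    case True
    have "R powr m \<le> R0 powr m" using True R m by (intro powr_mono2) auto
    then have "\<alpha> * R powr m \<le> K" using a by (simp add: K_def)
    then show ?thesis using R by simp
  next
    case False
    then have RR: "R > R0" by simp
    then have Rp: "R > 0" using R0 by simp
    have "R0 powr (1 - m) = 2 * \<alpha>" unfolding R0_def using a m1 by (simp add: powr_powr)
    moreover have "R0 powr (1 - m) \<le> R powr (1 - m)" using RR R0 m1 by (intro powr_mono2) auto
    ultimately have "2 * \<alpha> \<le> R powr (1 - m)" by simp
    then have "2 * \<alpha> * R powr m \<le> R powr (1 - m) * R powr m" using Rp by (intro mult_right_mono) auto
    also have "\<dots> = R" using Rp by (simp add: powr_add[symmetric])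
    finally have "\<alpha> * R powr m \<le> R / 2" by simp
    moreover have "K \<ge> 0" using a R0 by (simp add: K_def)
    ultimately show ?thesis by simp
  qed
  show ?thesis using main K0 by (intro exI[of _ "1/2"] exI[of _ K]) auto
qed



lemma const_bound:
  fixes \<alpha> m :: real
  assumes a: "\<alpha> > 0" and m: "0 < m" "m \<le> 1" and c: "m < 1 \<or> \<alpha> < 1"
  shows "\<exists>A \<gamma>. A > 0 \<and> 0 < \<gamma> \<and> \<gamma> < 1 \<and>
           (\<forall>k\<ge>1. \<exists>R>0. fact k / R^k * exp (\<alpha> * R powr m) \<le> A * \<gamma>^k)"
proof -
  obtain \<beta> K where b: "0 < \<beta>" "\<beta> < 1" and K: "K \<ge> 0" and bk: "\<And>R. R \<ge> 0 \<Longrightarrow> \<alpha> * R powr m \<le> \<beta> * R + K"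
    using weight_linear_bound[OF a m c] by blast
  define \<delta> where "\<delta> = (1 - \<beta>) / (2 * \<beta>)"
  have d: "\<delta> > 0" using b by (simp add: \<delta>_def)
  define \<gamma> where "\<gamma> = (1 + \<delta>) * \<beta>"
  have g: "\<gamma> = (1 + \<beta>) / 2" using b by (simp add: \<gamma>_def \<delta>_def field_simps)
  define A where "A = exp (K + 1) / \<delta>"
  have A: "A > 0" using d by (simp add: A_def)
  have main: "\<exists>R>0. fact k / R^k * exp (\<alpha> * R powr m) \<le> A * \<gamma>^k" if k: "k \<ge> 1" for k :: nat
  proof -
    define R where "R = real k / \<beta>"
    have R: "R > 0" using k b by (simp add: R_def)
    have kb: "\<beta> * R = real k" using b by (simp add: R_def)
    have Rk: "R ^ k = real k ^ k / \<beta> ^ k" by (simp add: R_def power_divide)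
    have kpos: "real k ^ k > 0" using k by simp
    have "fact k / R^k * exp (\<alpha> * R powr m) \<le> fact k / R^k * exp (\<beta> * R + K)"
      using bk[of R] R by (intro mult_left_mono) auto
    also have "\<dots> = (fact k * exp (real k)) * \<beta> ^ k / real k ^ k * exp K"
      unfolding Rk kb[symmetric] using b kpos by (simp add: exp_add field_simps)
    also have "\<dots> \<le> (exp 1 * real k * real k ^ k) * \<beta> ^ k / real k ^ k * exp K"
      using fact_exp_bound[OF k] b kpos by (intro mult_right_mono divide_right_mono) auto
    also have "\<dots> = exp (K + 1) * real k * \<beta> ^ k"
      using kpos by (simp add: exp_add field_simps)
    also have "\<dots> \<le> exp (K + 1) * ((1 + \<delta>) ^ k / \<delta>) * \<beta> ^ k"
    proof -
      have "1 + real k * \<delta> \<le> (1 + \<delta>) ^ k" using Bernoulli_inequality[of \<delta> k] d by simp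
      then have "real k \<le> (1 + \<delta>) ^ k / \<delta>" using d by (simp add: field_simps)
      then show ?thesis using b by (intro mult_right_mono mult_left_mono) auto
    qed
    also have "\<dots> = A * \<gamma> ^ k" by (simp add: A_def \<gamma>_def power_mult_distrib)
    finally show ?thesis using R by blast
  qed
  show ?thesis
    by (rule exI[of _ A], rule exI[of _ \<gamma>]) (use A b d main in \<open>auto simp: g\<close>)
qed



lemma Dop_eq: "Dop = deriv"
  by (rule ext) (simp add: Dop_def)

lemma norm_le_from_int:
  fixes J I :: ennreal
  assumes "J \<le> ennreal c * I" "I < \<infinity>" "c \<ge> 0" "p > 0"
  shows "enn2real J powr (1/p) \<le> c powr (1/p) * enn2real I powr (1/p)"
proof -
  have "enn2real J \<le> enn2real (ennreal c * I)"
    using assms by (intro enn2real_mono) (auto simp: ennreal_mult_less_top)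
  also have "\<dots> = c * enn2real I" using assms by (simp add: enn2real_mult)
  finally have "enn2real J powr (1/p) \<le> (c * enn2real I) powr (1/p)"
    using assms by (intro powr_mono2) auto
  then show ?thesis by (simp add: powr_mult)
qed

lemma fock_Dk_bound:
  fixes p \<alpha> m :: real
  assumes p: "p \<ge> 1" and a: "\<alpha> > 0" and m: "0 < m" "m \<le> 1" and c: "m < 1 \<or> \<alpha> < 1"
  shows "\<exists>A \<gamma>. A > 0 \<and> 0 < \<gamma> \<and> \<gamma> < 1 \<and>
     (\<forall>f k. f holomorphic_on UNIV \<longrightarrow> k \<ge> 1 \<longrightarrow>
        fock_integral p \<alpha> m ((Dop ^^ k) f) \<le> ennreal (A * \<gamma>^k) * fock_integral p \<alpha> m f)"
proof -
  obtain A \<gamma> where A: "A > 0" and g: "0 < \<gamma>" "\<gamma> < 1"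
    and b: "\<And>k. k \<ge> 1 \<Longrightarrow> \<exists>R>0. fact k / R^k * exp (\<alpha> * R powr m) \<le> A * \<gamma>^k"
    using const_bound[OF a m c] by blast
  have main: "fock_integral p \<alpha> m ((Dop ^^ k) f) \<le> ennreal (A powr p * (\<gamma> powr p)^k) * fock_integral p \<alpha> m f"
    if hol: "f holomorphic_on UNIV" and k: "k \<ge> 1" for f k
  proof -
    obtain R where R: "R > 0" and bR: "fact k / R^k * exp (\<alpha> * R powr m) \<le> A * \<gamma>^k"
      using b[OF k] by blast
    have st: "fock_integral p \<alpha> m ((Dop ^^ k) f) \<le>
       ennreal ((fact k / R^k) powr p * exp (p * \<alpha> * R powr m)) * fock_integral p \<alpha> m f"
      unfolding Dop_eq using fock_deriv_bound[OF hol R p a m] .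
    have "(fact k / R^k) powr p * exp (p * \<alpha> * R powr m) = (fact k / R^k * exp (\<alpha> * R powr m)) powr p"
    proof -
      have "(fact k / R^k * exp (\<alpha> * R powr m)) powr p = (fact k / R^k) powr p * exp (\<alpha> * R powr m * p)"
        by (simp only: powr_mult exp_powr_real)
      then show ?thesis by (simp add: mult_ac)
    qed
    also have "\<dots> \<le> (A * \<gamma>^k) powr p"
      using bR R p by (intro powr_mono2) auto
    also have "\<dots> = A powr p * (\<gamma> powr p)^k"
      using g by (simp add: powr_mult powr_power powr_realpow[symmetric] powr_powr mult_ac)
    finally have le: "(fact k / R^k) powr p * exp (p * \<alpha> * R powr m) \<le> A powr p * (\<gamma> powr p)^k" .
    have "ennreal ((fact k / R^k) powr p * exp (p * \<alpha> * R powr m)) * fock_integral p \<alpha> m f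
        \<le> ennreal (A powr p * (\<gamma> powr p)^k) * fock_integral p \<alpha> m f"
      by (rule mult_right_mono[OF ennreal_leI[OF le]]) simp
    then show ?thesis using st by (rule order_trans[rotated])
  qed
  have gp: "\<gamma> powr p < 1" using powr_less_mono2[of p \<gamma> 1] g p by simp
  show ?thesis
    by (rule exI[of _ "A powr p"], rule exI[of _ "\<gamma> powr p"])
       (use A g gp p main in auto)
qed



lemma jensen_sum:
  fixes x :: "nat \<Rightarrow> real"
  assumes S: "finite S" "S \<noteq> {}" and x0: "\<And>k. k \<in> S \<Longrightarrow> x k \<ge> 0" and p: "p \<ge> 1"
  shows "((\<Sum>k\<in>S. x k) / card S) powr p \<le> (\<Sum>k\<in>S. x k powr p) / card S"
proof -
  define a where "a = (\<Sum>k\<in>S. x k) / card S"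
  have cS: "real (card S) > 0" using S by (simp add: card_gt_0_iff)
  have a0: "a \<ge> 0" unfolding a_def using x0 by (intro divide_nonneg_pos sum_nonneg cS) auto
  have r0: "(\<Sum>k\<in>S. x k powr p) \<ge> 0" by (intro sum_nonneg) auto
  show ?thesis
  proof (cases "a = 0")
    case True
    then show ?thesis using r0 cS p unfolding a_def[symmetric] by simp
  next
    case False
    then have ap: "a > 0" using a0 by simp
    have "(\<Sum>k\<in>S. a powr p + p * a powr (p - 1) * (x k - a)) \<le> (\<Sum>k\<in>S. x k powr p)"
      by (intro sum_mono powr_tangent[OF ap _ p] x0)
    moreover have "(\<Sum>k\<in>S. a powr p + p * a powr (p - 1) * (x k - a))
        = card S * a powr p + p * a powr (p - 1) * ((\<Sum>k\<in>S. x k) - card S * a)"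
      by (simp add: sum.distrib sum_distrib_left[symmetric] sum_subtractf)
    moreover have "(\<Sum>k\<in>S. x k) - card S * a = 0" using cS by (simp add: a_def)
    ultimately have "card S * a powr p \<le> (\<Sum>k\<in>S. x k powr p)" by simp
    then show ?thesis using cS unfolding a_def[symmetric] by (simp add: field_simps)
  qed
qed

lemma fock_norm_nonneg: "fock_norm p \<alpha> m f \<ge> 0"
  by (simp add: fock_norm_def)

lemma good_direction:
  fixes p \<alpha> m :: real
  assumes p: "p \<ge> 1" and a: "\<alpha> > 0" and m: "0 < m" "m \<le> 1" and c: "m < 1 \<or> \<alpha> < 1"
  shows "D_power_bounded p \<alpha> m \<and> D_uniformly_mean_ergodic p \<alpha> m"
proof -
  obtain A \<gamma> where A: "A > 0" and g: "0 < \<gamma>" "\<gamma> < 1"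
    and b: "\<And>f k. f holomorphic_on UNIV \<Longrightarrow> k \<ge> 1 \<Longrightarrow>
        fock_integral p \<alpha> m ((Dop ^^ k) f) \<le> ennreal (A * \<gamma>^k) * fock_integral p \<alpha> m f"
    using fock_Dk_bound[OF p a m c] by blast
  have p0: "p > 0" using p by simp
  have sp: "f holomorphic_on UNIV" "fock_integral p \<alpha> m f < \<infinity>" if "f \<in> fock_space p \<alpha> m" for f
    using that by (auto simp: fock_space_def)
  have PB: "D_power_bounded p \<alpha> m"
    unfolding D_power_bounded_def
  proof (intro exI[of _ "max 1 (A powr (1/p))"] allI ballI)
    fix n f assume f: "f \<in> fock_space p \<alpha> m"
    show "fock_norm p \<alpha> m ((Dop ^^ n) f) \<le> max 1 (A powr (1/p)) * fock_norm p \<alpha> m f"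
    proof (cases "n = 0")
      case True
      then show ?thesis using fock_norm_nonneg[of p \<alpha> m f] by (simp add: mult_le_cancel_right1)
    next
      case False
      then have n: "n \<ge> 1" by simp
      have "fock_norm p \<alpha> m ((Dop ^^ n) f) \<le> (A * \<gamma>^n) powr (1/p) * fock_norm p \<alpha> m f"
        unfolding fock_norm_def
        by (rule norm_le_from_int[OF b[OF sp(1)[OF f] n] sp(2)[OF f]]) (use A g p0 in auto)
      also have "\<dots> \<le> A powr (1/p) * fock_norm p \<alpha> m f"
      proof (intro mult_right_mono fock_norm_nonneg)
        have "A * \<gamma>^n \<le> A" using A g by (simp add: power_le_one mult_le_cancel_left1)
        then show "(A * \<gamma>^n) powr (1/p) \<le> A powr (1/p)" using A g p0 by (intro powr_mono2) auto
      qed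
      also have "\<dots> \<le> max 1 (A powr (1/p)) * fock_norm p \<alpha> m f"
        by (intro mult_right_mono fock_norm_nonneg) auto
      finally show ?thesis .
    qed
  qed
  define B where "B = A / (1 - \<gamma>)"
  have B: "B > 0" using A g by (simp add: B_def)
  have ces: "fock_integral p \<alpha> m (\<lambda>z. cesaro_D n f z - 0) \<le> ennreal (B / n) * fock_integral p \<alpha> m f"
    if f: "f \<in> fock_space p \<alpha> m" and n: "n \<ge> 1" for f n
  proof -
    define w where "w z = exp (- p * \<alpha> * norm z powr m)" for z :: complex
    define G where "G k z = norm ((Dop ^^ k) f z) powr p * w z" for k z
    have hol: "f holomorphic_on UNIV" using sp(1)[OF f] .
    have Gm: "(\<lambda>z. ennreal (G k z)) \<in> borel_measurable lborel" for k
    proof -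
      have "continuous_on UNIV ((Dop ^^ k) f)" unfolding Dop_eq
        by (intro holomorphic_on_imp_continuous_on holomorphic_higher_deriv hol) auto
      from meas_weighted[OF this p0 m(1), of \<alpha>] show ?thesis
        by (simp add: G_def w_def)
    qed
    have G0: "G k z \<ge> 0" for k z by (simp add: G_def w_def)
    have cardn: "card {1..n} = n" by simp
    have pt: "ennreal (norm (cesaro_D n f z - 0) powr p * w z) \<le> ennreal (1 / n) * (\<Sum>k\<in>{1..n}. ennreal (G k z))" for z
    proof -
      have "norm (cesaro_D n f z - 0) = (\<Sum>k\<in>{1..n}. norm ((Dop ^^ k) f z)) / card {1..n} \<or>
            norm (cesaro_D n f z - 0) \<le> (\<Sum>k\<in>{1..n}. norm ((Dop ^^ k) f z)) / card {1..n}"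
        using n norm_sum[of "\<lambda>k. (Dop ^^ k) f z" "{1..n}"]
        by (auto simp: cesaro_D_def norm_mult norm_divide divide_right_mono)
      then have le1: "norm (cesaro_D n f z - 0) \<le> (\<Sum>k\<in>{1..n}. norm ((Dop ^^ k) f z)) / card {1..n}" by auto
      have "norm (cesaro_D n f z - 0) powr p \<le> ((\<Sum>k\<in>{1..n}. norm ((Dop ^^ k) f z)) / card {1..n}) powr p"
        using le1 p0 by (intro powr_mono2) auto
      also have "\<dots> \<le> (\<Sum>k\<in>{1..n}. norm ((Dop ^^ k) f z) powr p) / card {1..n}"
        using n by (intro jensen_sum p) auto
      finally have "norm (cesaro_D n f z - 0) powr p * w z \<le> (\<Sum>k\<in>{1..n}. norm ((Dop ^^ k) f z) powr p) / card {1..n} * w z"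
        by (intro mult_right_mono) (auto simp: w_def)
      also have "\<dots> = 1 / n * (\<Sum>k\<in>{1..n}. G k z)"
        by (simp add: G_def sum_distrib_right)
      finally have "ennreal (norm (cesaro_D n f z - 0) powr p * w z) \<le> ennreal (1 / n * (\<Sum>k\<in>{1..n}. G k z))"
        by (rule ennreal_leI)
      also have "\<dots> = ennreal (1 / n) * ennreal (\<Sum>k\<in>{1..n}. G k z)"
        by (rule ennreal_mult) (auto intro: sum_nonneg G0)
      also have "\<dots> = ennreal (1 / n) * (\<Sum>k\<in>{1..n}. ennreal (G k z))"
        using G0 by simp
      finally show ?thesis .
    qed
    have "fock_integral p \<alpha> m (\<lambda>z. cesaro_D n f z - 0) \<le> (\<integral>\<^sup>+ z. ennreal (1 / n) * (\<Sum>k\<in>{1..n}. ennreal (G k z)) \<partial>lborel)"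
      unfolding fock_integral_def using pt by (intro nn_integral_mono) (simp add: w_def)
    also have "\<dots> = ennreal (1 / n) * (\<Sum>k\<in>{1..n}. \<integral>\<^sup>+ z. ennreal (G k z) \<partial>lborel)"
      using Gm by (simp add: nn_integral_cmult nn_integral_sum)
    also have "\<dots> \<le> ennreal (1 / n) * (\<Sum>k\<in>{1..n}. ennreal (A * \<gamma>^k) * fock_integral p \<alpha> m f)"
    proof (intro mult_left_mono sum_mono)
      fix k assume "k \<in> {1..n}"
      then have "k \<ge> 1" by simp
      then show "(\<integral>\<^sup>+ z. ennreal (G k z) \<partial>lborel) \<le> ennreal (A * \<gamma>^k) * fock_integral p \<alpha> m f"
        using b[OF hol] unfolding fock_integral_def G_def w_def by simp
    qed auto
    also have "\<dots> = ennreal (1 / n) * ennreal (\<Sum>k\<in>{1..n}. A * \<gamma>^k) * fock_integral p \<alpha> m f"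
      using A g by (simp add: sum_distrib_right[symmetric] mult.assoc)
    also have "\<dots> \<le> ennreal (1 / n) * ennreal B * fock_integral p \<alpha> m f"
    proof (intro mult_right_mono mult_left_mono ennreal_leI)
      have "(\<Sum>k\<in>{1..n}. \<gamma>^k) \<le> (\<Sum>k<Suc n. \<gamma>^k)"
        using g by (intro sum_mono2) auto
      also have "\<dots> = (1 - \<gamma>^Suc n) / (1 - \<gamma>)" using g by (subst sum_gp_strict) simp
      also have "\<dots> \<le> 1 / (1 - \<gamma>)" using g by (intro divide_right_mono) auto
      finally have "(\<Sum>k\<in>{1..n}. \<gamma>^k) \<le> 1 / (1 - \<gamma>)" .
      then show "(\<Sum>k\<in>{1..n}. A * \<gamma>^k) \<le> B"
        using A unfolding B_def by (simp add: sum_distrib_left[symmetric] mult_left_mono divide_inverse)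
    qed auto
    also have "\<dots> = ennreal (B / n) * fock_integral p \<alpha> m f"
      using B by (simp add: ennreal_mult[symmetric])
    finally show ?thesis .
  qed
  have UME: "D_uniformly_mean_ergodic p \<alpha> m"
    unfolding D_uniformly_mean_ergodic_def
  proof (intro exI[of _ "\<lambda>f z. 0"] conjI ballI allI impI)
    fix f :: "complex \<Rightarrow> complex" assume "f \<in> fock_space p \<alpha> m"
    show "(\<lambda>z. 0) \<in> fock_space p \<alpha> m"
      using p0 by (simp add: fock_space_def fock_integral_def)
  next
    fix \<epsilon> :: real assume e: "\<epsilon> > 0"
    define N where "N = nat \<lceil>B / \<epsilon> powr p\<rceil> + 1"
    show "\<forall>\<^sub>F n in sequentially. \<forall>f\<in>fock_space p \<alpha> m.
            fock_norm p \<alpha> m (\<lambda>z. cesaro_D n f z - (\<lambda>z. 0) z) \<le> \<epsilon> * fock_norm p \<alpha> m f"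
      unfolding eventually_sequentially
    proof (intro exI[of _ N] allI impI ballI)
      fix n f assume nN: "N \<le> n" and f: "f \<in> fock_space p \<alpha> m"
      have n: "n \<ge> 1" using nN by (simp add: N_def)
      have "fock_norm p \<alpha> m (\<lambda>z. cesaro_D n f z - 0) \<le> (B / n) powr (1/p) * fock_norm p \<alpha> m f"
        unfolding fock_norm_def
        by (rule norm_le_from_int[OF ces[OF f n] sp(2)[OF f]]) (use B p0 in auto)
      also have "\<dots> \<le> \<epsilon> * fock_norm p \<alpha> m f"
      proof (intro mult_right_mono fock_norm_nonneg)
        have "B / \<epsilon> powr p \<le> real N" unfolding N_def by linarith
        then have "B / \<epsilon> powr p \<le> real n" using nN by linarith
        then have "B / n \<le> \<epsilon> powr p" using n e by (simp add: field_simps)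
        then have "(B / n) powr (1/p) \<le> (\<epsilon> powr p) powr (1/p)" using B p0 by (intro powr_mono2) auto
        also have "\<dots> = \<epsilon>" using e p0 by (simp add: powr_powr)
        finally show "(B / n) powr (1/p) \<le> \<epsilon>" .
      qed
      finally show "fock_norm p \<alpha> m (\<lambda>z. cesaro_D n f z - (\<lambda>z. 0) z) \<le> \<epsilon> * fock_norm p \<alpha> m f" by simp
    qed
  qed
  show ?thesis using PB UME by simp
qed



lemma exp_neg_integrable:
  fixes c :: real
  assumes c: "c > 0"
  shows "(\<integral>\<^sup>+ z. ennreal (exp (- c * norm (z::complex))) \<partial>lborel) < \<infinity>"
proof -
  define d where "d = min 1 (c / 4)"
  have d: "d > 0" "d \<le> 1" "d \<le> c / 4" using c by (auto simp: d_def)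
  define a where "a k = exp (- c * real k) * (unit_ball_vol 2 * (real k + 1) ^ 2)" for k :: nat
  have a0: "a k \<ge> 0" for k by (simp add: a_def unit_ball_vol_nonneg)
  have abound: "a k \<le> unit_ball_vol 2 / d^2 * exp (- c / 2) ^ k" for k
  proof -
    have dk: "d * real k \<le> c / 4 * real k" using d by (intro mult_right_mono) auto
    have "d * (real k + 1) \<le> 1 + c * real k / 4"
      using dk d by (simp add: algebra_simps)
    also have "\<dots> \<le> exp (c * real k / 4)" using exp_ge_add_one_self[of "c * real k / 4"] by simp
    finally have "(d * (real k + 1))^2 \<le> exp (c * real k / 4) ^ 2"
      using d by (intro power_mono) auto
    also have "\<dots> = exp (c * real k / 2)" by (simp add: exp_double[symmetric] power2_eq_square exp_add[symmetric])
    finally have "d^2 * (real k + 1)^2 \<le> exp (c * real k / 2)" by (simp only: power_mult_distrib)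
    then have h: "(real k + 1)^2 \<le> exp (c * real k / 2) / d^2" using d
      by (subst pos_le_divide_eq) (auto simp: mult.commute)
    have "a k \<le> exp (- c * real k) * (unit_ball_vol 2 * (exp (c * real k / 2) / d^2))"
      unfolding a_def by (intro mult_left_mono h) (auto simp: unit_ball_vol_nonneg)
    also have "\<dots> = unit_ball_vol 2 / d^2 * exp (- c * real k / 2)"
      by (simp add: field_simps exp_add[symmetric])
    also have "exp (- c * real k / 2) = exp (- c / 2) ^ k"
      by (simp add: exp_of_nat_mult[symmetric] mult_ac)
    finally show ?thesis .
  qed
  have sa: "summable a"
  proof (rule summable_comparison_test[OF exI[of _ 0]])
    show "\<forall>n\<ge>0. norm (a n) \<le> unit_ball_vol 2 / d^2 * exp (- c / 2) ^ n"
      using abound a0 by simp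
    show "summable (\<lambda>n. unit_ball_vol 2 / d^2 * exp (- c / 2) ^ n)"
      using c by (intro summable_mult summable_geometric) auto
  qed
  define g where "g k z = ennreal (exp (- c * real k)) * indicator (ball (0::complex) (real k + 1)) z" for k z
  have gm: "g k \<in> borel_measurable lborel" for k
  proof -
    have [measurable]: "ball (0::complex) (real k + 1) \<in> sets borel" by simp
    show ?thesis unfolding g_def by measurable
  qed
  have pt: "ennreal (exp (- c * norm z)) \<le> (\<Sum>k. g k z)" for z :: complex
  proof -
    define j where "j = nat \<lfloor>norm z\<rfloor>"
    have fl: "real j = of_int \<lfloor>norm z\<rfloor>" unfolding j_def by simp
    have j1: "real j \<le> norm z" using fl floor_correct[of "norm z"] by linarith
    have j2: "norm z < real j + 1" using fl floor_correct[of "norm z"] by simp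
    have "ennreal (exp (- c * norm z)) \<le> g j z"
      unfolding g_def using j1 j2 c by (auto intro!: ennreal_leI simp: dist_norm)
    also have "\<dots> \<le> (\<Sum>k. g k z)" using sum_le_suminf[OF summableI, of "{j}" "\<lambda>k. g k z"] by simp
    finally show ?thesis .
  qed
  have "(\<integral>\<^sup>+ z. ennreal (exp (- c * norm (z::complex))) \<partial>lborel) \<le> (\<integral>\<^sup>+ z. (\<Sum>k. g k z) \<partial>lborel)"
    by (intro nn_integral_mono pt)
  also have "\<dots> = (\<Sum>k. \<integral>\<^sup>+ z. g k z \<partial>lborel)"
    by (rule nn_integral_suminf[OF gm])
  also have "\<dots> = (\<Sum>k. ennreal (a k))"
  proof (intro suminf_cong)
    fix k
    have "(\<integral>\<^sup>+ z. g k z \<partial>lborel) = ennreal (exp (- c * real k)) * emeasure lborel (ball (0::complex) (real k + 1))"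
      unfolding g_def by (simp add: nn_integral_cmult_indicator)
    also have "\<dots> = ennreal (a k)"
      by (simp add: emeasure_ball a_def ennreal_mult)
    finally show "(\<integral>\<^sup>+ z. g k z \<partial>lborel) = ennreal (a k)" .
  qed
  also have "\<dots> < \<infinity>" using ennreal_suminf_neq_top[OF sa a0] by (simp add: top.not_eq_extremum)
  finally show ?thesis .
qed



lemma superlinear_bound:
  fixes \<alpha> m :: real
  assumes a: "\<alpha> > 0" and m: "m > 1"
  shows "\<exists>K0. \<forall>t\<ge>0. t - \<alpha> * t powr m \<le> K0 - t"
proof -
  define R0 where "R0 = (2 / \<alpha>) powr (1 / (m - 1))"
  have R0: "R0 > 0" using a by (simp add: R0_def)
  show ?thesis
  proof (intro exI[of _ "2 * R0"] allI impI)
    fix t :: real assume t: "t \<ge> 0"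
    show "t - \<alpha> * t powr m \<le> 2 * R0 - t"
    proof (cases "t \<le> R0")
      case True
      have "\<alpha> * t powr m \<ge> 0" using a by simp
      then show ?thesis using True by simp
    next
      case False
      then have tp: "t > 0" "t > R0" using R0 by auto
      have "R0 powr (m - 1) = 2 / \<alpha>" unfolding R0_def using a m by (simp add: powr_powr)
      moreover have "R0 powr (m - 1) \<le> t powr (m - 1)" using tp R0 m by (intro powr_mono2) auto
      ultimately have "2 / \<alpha> \<le> t powr (m - 1)" by simp
      then have "2 \<le> \<alpha> * t powr (m - 1)" using a by (simp add: field_simps)
      then have "2 * t \<le> \<alpha> * t powr (m - 1) * t" using tp by (intro mult_right_mono) auto
      also have "\<alpha> * t powr (m - 1) * t = \<alpha> * t powr m"
        using tp by (simp add: powr_diff field_simps)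
      finally show ?thesis using R0 by simp
    qed
  qed
qed

lemma bad_exp_in_space:
  fixes p \<alpha> m l :: real
  assumes p: "p \<ge> 1" and a: "\<alpha> > 0" and m: "m > 0" and bad: "1 < m \<or> (m = 1 \<and> 1 \<le> \<alpha>)"
    and l: "0 \<le> l" "l < 1"
  shows "(\<lambda>z. exp (of_real l * z)) \<in> fock_space p \<alpha> m"
    and "fock_integral p \<alpha> m (\<lambda>z. exp (of_real l * z)) > 0"
proof -
  define h where "h z = norm (exp (of_real l * z)) powr p * exp (- p * \<alpha> * norm z powr m)" for z :: complex
  have heq: "h z = exp (l * Re z * p - p * \<alpha> * norm z powr m)" for z
    by (simp add: h_def norm_exp_eq_Re exp_powr_real exp_diff exp_minus field_simps)
  have hpos: "h z > 0" for z by (simp add: heq)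
  have cont: "continuous_on UNIV (\<lambda>z::complex. exp (of_real l * z))" by (intro continuous_intros)
  have hm: "(\<lambda>z. ennreal (h z)) \<in> borel_measurable borel"
    unfolding h_def using meas_weighted[OF cont _ m] p by simp
  obtain c K where c: "c > 0" and hb: "\<And>z. h z \<le> exp K * exp (- c * norm z)"
  proof -
    have base: "l * Re z * p \<le> l * norm z * p" for z
      using l p abs_Re_le_cmod[of z] by (intro mult_right_mono mult_left_mono) auto
    show ?thesis
    proof (cases "m = 1")
      case True
      with bad have a1: "\<alpha> \<ge> 1" by simp
      show ?thesis
      proof (rule that[of "p * (1 - l)" 0])
        show "p * (1 - l) > 0" using p l by simp
        fix z :: complex
        have "p * \<alpha> * norm z \<ge> p * norm z" using a1 p by (simp add: mult_right_mono)
        then have "l * Re z * p - p * \<alpha> * norm z powr m \<le> - (p * (1 - l)) * norm z"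
          using base[of z] True by (simp add: algebra_simps)
        then show "h z \<le> exp 0 * exp (- (p * (1 - l)) * norm z)" by (simp add: heq)
      qed
    next
      case False
      with bad have m1: "m > 1" by simp
      obtain K0 where K0: "\<And>t. t \<ge> 0 \<Longrightarrow> t - \<alpha> * t powr m \<le> K0 - t"
        using superlinear_bound[OF a m1] by blast
      show ?thesis
      proof (rule that[of p "p * K0"])
        show "p > 0" using p by simp
        fix z :: complex
        have "p * (norm z - \<alpha> * norm z powr m) \<le> p * (K0 - norm z)"
          using K0[of "norm z"] p by (intro mult_left_mono) auto
        moreover have "l * norm z * p \<le> norm z * p"
        proof -
          have "l * norm z \<le> 1 * norm z" using l by (intro mult_right_mono) auto
          then show ?thesis using p by (intro mult_right_mono) auto
        qed
        ultimately have "l * Re z * p - p * \<alpha> * norm z powr m \<le> p * K0 + (- p * norm z)"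
          using base[of z] by (simp add: algebra_simps)
        then show "h z \<le> exp (p * K0) * exp (- p * norm z)" by (simp add: heq exp_add[symmetric])
      qed
    qed
  qed
  have "fock_integral p \<alpha> m (\<lambda>z. exp (of_real l * z)) = (\<integral>\<^sup>+ z. ennreal (h z) \<partial>lborel)"
    unfolding fock_integral_def h_def by simp
  also have "\<dots> \<le> (\<integral>\<^sup>+ z. ennreal (exp K) * ennreal (exp (- c * norm (z::complex))) \<partial>lborel)"
  proof (intro nn_integral_mono)
    fix z :: complex
    show "ennreal (h z) \<le> ennreal (exp K) * ennreal (exp (- c * norm z))"
      using hb[of z] by (subst ennreal_mult[symmetric]) (auto intro: ennreal_leI)
  qed
  also have "\<dots> = ennreal (exp K) * (\<integral>\<^sup>+ z. ennreal (exp (- c * norm (z::complex))) \<partial>lborel)"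
    by (rule nn_integral_cmult) measurable
  also have "\<dots> < \<infinity>" using exp_neg_integrable[OF c] by (simp add: ennreal_mult_less_top)
  finally have fin: "fock_integral p \<alpha> m (\<lambda>z. exp (of_real l * z)) < \<infinity>" .
  show "(\<lambda>z. exp (of_real l * z)) \<in> fock_space p \<alpha> m"
    unfolding fock_space_def using fin by (auto intro!: holomorphic_intros)
  have "(\<integral>\<^sup>+ z. ennreal (h z) \<partial>lborel) \<noteq> 0"
  proof
    assume "(\<integral>\<^sup>+ z. ennreal (h z) \<partial>lborel) = 0"
    then have "AE z in lborel. ennreal (h z) = 0" using hm by (simp add: nn_integral_0_iff_AE)
    then have "emeasure lborel {z \<in> space lborel. \<not> ennreal (h z) = 0} = 0" by (rule AE_E2)
    moreover have "{z \<in> space lborel. \<not> ennreal (h z) = 0} = UNIV"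
      using hpos by (auto simp: less_le_not_le) (metis ennreal_eq_0_iff hpos not_le)
    ultimately show False by simp
  qed
  then show "fock_integral p \<alpha> m (\<lambda>z. exp (of_real l * z)) > 0"
    unfolding fock_integral_def h_def by (simp add: zero_less_iff_neq_zero)
qed



lemma quasi_tri:
  fixes u x y p :: real
  assumes "0 \<le> u" "u \<le> x + y" "0 \<le> x" "0 \<le> y" "p > 0"
  shows "u powr p \<le> 2 powr p * (x powr p + y powr p)"
proof -
  have "u \<le> 2 * max x y" using assms by simp
  then have "u powr p \<le> (2 * max x y) powr p" using assms by (intro powr_mono2) auto
  also have "\<dots> = 2 powr p * max x y powr p" by (simp add: powr_mult)
  also have "max x y powr p \<le> x powr p + y powr p" by (simp add: max_def)
  finally show ?thesis by simp
qed

lemma fock_sub: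
  fixes F1 F2 :: "complex \<Rightarrow> complex"
  assumes c1: "continuous_on UNIV F1" and c2: "continuous_on UNIV F2" and p: "p > 0" and m: "m > 0"
  shows "fock_integral p \<alpha> m (\<lambda>z. F1 z - F2 z) \<le> ennreal (2 powr p) * (fock_integral p \<alpha> m F1 + fock_integral p \<alpha> m F2)"
proof -
  define w where "w z = exp (- p * \<alpha> * norm z powr m)" for z :: complex
  have m1: "(\<lambda>z. ennreal (norm (F1 z) powr p * w z)) \<in> borel_measurable lborel"
    using meas_weighted[OF c1 p m] by (simp add: w_def)
  have m2: "(\<lambda>z. ennreal (norm (F2 z) powr p * w z)) \<in> borel_measurable lborel"
    using meas_weighted[OF c2 p m] by (simp add: w_def)
  have "fock_integral p \<alpha> m (\<lambda>z. F1 z - F2 z) \<le> (\<integral>\<^sup>+ z. ennreal (2 powr p) * (ennreal (norm (F1 z) powr p * w z) + ennreal (norm (F2 z) powr p * w z)) \<partial>lborel)"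
    unfolding fock_integral_def
  proof (intro nn_integral_mono)
    fix z
    have t1: "norm (F1 z - F2 z) powr p \<le> 2 powr p * (norm (F1 z) powr p + norm (F2 z) powr p)"
      using p by (intro quasi_tri norm_triangle_ineq4) auto
    then have "norm (F1 z - F2 z) powr p * w z \<le> 2 powr p * (norm (F1 z) powr p * w z + norm (F2 z) powr p * w z)"
    proof -
      have "norm (F1 z - F2 z) powr p * w z \<le> 2 powr p * (norm (F1 z) powr p + norm (F2 z) powr p) * w z"
        by (rule mult_right_mono[OF t1]) (simp add: w_def)
      then show ?thesis by (simp add: algebra_simps)
    qed
    then have "ennreal (norm (F1 z - F2 z) powr p * w z) \<le> ennreal (2 powr p * (norm (F1 z) powr p * w z + norm (F2 z) powr p * w z))"
      by (rule ennreal_leI)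
    also have "\<dots> = ennreal (2 powr p) * (ennreal (norm (F1 z) powr p * w z) + ennreal (norm (F2 z) powr p * w z))"
      by (simp add: ennreal_mult ennreal_plus w_def)
    finally show "ennreal (norm (F1 z - F2 z) powr p * exp (- p * \<alpha> * norm z powr m)) \<le> ennreal (2 powr p) * (ennreal (norm (F1 z) powr p * w z) + ennreal (norm (F2 z) powr p * w z))"
      by (simp add: w_def)
  qed
  also have "\<dots> = ennreal (2 powr p) * (fock_integral p \<alpha> m F1 + fock_integral p \<alpha> m F2)"
    using m1 m2 by (simp add: nn_integral_cmult nn_integral_add fock_integral_def w_def)
  finally show ?thesis .
qed

lemma fock_scale:
  fixes F :: "complex \<Rightarrow> complex"
  assumes cF: "continuous_on UNIV F" and p: "p > 0" and m: "m > 0"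
  shows "fock_integral p \<alpha> m (\<lambda>z. c * F z) = ennreal (norm c powr p) * fock_integral p \<alpha> m F"
proof -
  have mF: "(\<lambda>z. ennreal (norm (F z) powr p * exp (- p * \<alpha> * norm z powr m))) \<in> borel_measurable lborel"
    using meas_weighted[OF cF p m] by simp
  have "fock_integral p \<alpha> m (\<lambda>z. c * F z) = (\<integral>\<^sup>+ z. ennreal (norm c powr p) * ennreal (norm (F z) powr p * exp (- p * \<alpha> * norm z powr m)) \<partial>lborel)"
    unfolding fock_integral_def by (intro nn_integral_cong) (simp add: norm_mult powr_mult ennreal_mult[symmetric] mult.assoc)
  also have "\<dots> = ennreal (norm c powr p) * fock_integral p \<alpha> m F"
    unfolding fock_integral_def by (rule nn_integral_cmult[OF mF])
  finally show ?thesis .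
qed

lemma Dop_exp_pow: "(Dop ^^ k) (\<lambda>z. exp (a * z)) = (\<lambda>z. a ^ k * exp (a * z))"
proof (induction k)
  case 0
  then show ?case by simp
next
  case (Suc k)
  have "Dop (\<lambda>z. a ^ k * exp (a * z)) = (\<lambda>z. a ^ Suc k * exp (a * z))"
  proof (rule ext)
    fix z
    have "((\<lambda>z. a ^ k * exp (a * z)) has_field_derivative a ^ Suc k * exp (a * z)) (at z)"
      by (auto intro!: derivative_eq_intros simp: algebra_simps)
    then show "Dop (\<lambda>z. a ^ k * exp (a * z)) z = a ^ Suc k * exp (a * z)"
      unfolding Dop_def by (rule DERIV_imp_deriv)
  qed
  then show ?case using Suc by simp
qed

lemma raise_p:
  fixes x y e p :: real
  assumes "x \<ge> 0" "y \<ge> 0" "e \<ge> 0" "p > 0" "x powr (1/p) \<le> e * y powr (1/p)"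
  shows "x \<le> e powr p * y"
proof -
  have "x = (x powr (1/p)) powr p" using assms by (simp add: powr_powr)
  also have "\<dots> \<le> (e * y powr (1/p)) powr p" using assms by (intro powr_mono2) auto
  also have "\<dots> = e powr p * y" using assms by (simp add: powr_mult powr_powr)
  finally show ?thesis .
qed



lemma not_ume:
  fixes p \<alpha> m :: real
  assumes p: "p \<ge> 1" and m: "m > 0"
    and sp: "\<And>l. 1/2 \<le> l \<Longrightarrow> l < 1 \<Longrightarrow> (\<lambda>z. exp (of_real l * z)) \<in> fock_space p \<alpha> m \<and>
               fock_integral p \<alpha> m (\<lambda>z. exp (of_real l * z)) > 0"
  shows "\<not> D_uniformly_mean_ergodic p \<alpha> m"
proof
  assume "D_uniformly_mean_ergodic p \<alpha> m"
  then obtain P where Psp: "\<And>f. f \<in> fock_space p \<alpha> m \<Longrightarrow> P f \<in> fock_space p \<alpha> m"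
    and conv: "\<And>\<epsilon>. \<epsilon> > 0 \<Longrightarrow> \<forall>\<^sub>F n in sequentially. \<forall>f \<in> fock_space p \<alpha> m.
          fock_norm p \<alpha> m (\<lambda>z. cesaro_D n f z - P f z) \<le> \<epsilon> * fock_norm p \<alpha> m f"
    unfolding D_uniformly_mean_ergodic_def by blast
  obtain N0 where N0: "\<And>n f. n \<ge> N0 \<Longrightarrow> f \<in> fock_space p \<alpha> m \<Longrightarrow>
      fock_norm p \<alpha> m (\<lambda>z. cesaro_D n f z - P f z) \<le> 1/32 * fock_norm p \<alpha> m f"
    using conv[of "1/32"] unfolding eventually_sequentially by auto
  define N where "N = max N0 1"
  have N1: "N \<ge> 1" and NN0: "N \<ge> N0" by (auto simp: N_def)
  have Nr: "real N \<ge> 1" using N1 by simp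
  define l :: real where "l = 1 - 1 / (2 * real N)"
  have l: "1/2 \<le> l" "l < 1" using Nr by (auto simp: l_def field_simps)
  have l0: "l > 0" using l by simp
  define f where "f = (\<lambda>z::complex. exp (of_real l * z))"
  have fsp: "f \<in> fock_space p \<alpha> m" and Ipos: "fock_integral p \<alpha> m f > 0"
    using sp[OF l] by (auto simp: f_def)
  have Ifin: "fock_integral p \<alpha> m f < \<infinity>" using fsp by (simp add: fock_space_def)
  have p0: "p > 0" using p by simp
  define g where "g = P f"
  have gsp: "g \<in> fock_space p \<alpha> m" using Psp[OF fsp] by (simp add: g_def)
  have cg: "continuous_on UNIV g" using gsp holomorphic_on_imp_continuous_on by (auto simp: fock_space_def)
  have cf: "continuous_on UNIV f" unfolding f_def by (intro continuous_intros)
  have Gfin: "fock_integral p \<alpha> m g < \<infinity>" using gsp by (simp add: fock_space_def)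
  define cs where "cs n = (1 / real n) * (\<Sum>k=1..n. l ^ k)" for n
  have cesf: "cesaro_D n f z = of_real (cs n) * f z" for n z
    unfolding cesaro_D_def cs_def f_def Dop_exp_pow
    by (simp add: sum_distrib_right mult.assoc)
  define a where "a = cs N"
  define b where "b = cs (8 * N)"
  have a_ge: "a \<ge> 1/2"
  proof -
    have lN: "l ^ N \<ge> 1/2"
    proof -
      have "1 + real N * (- 1 / (2 * real N)) \<le> (1 + (- 1 / (2 * real N))) ^ N"
        using Nr by (intro Bernoulli_inequality) (simp add: field_simps)
      moreover have "1 + real N * (- 1 / (2 * real N)) = 1/2" using Nr by (simp add: field_simps)
      ultimately show ?thesis by (simp add: l_def)
    qed
    have "(\<Sum>k=1..N. l ^ N) \<le> (\<Sum>k=1..N. l ^ k)"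
      using l l0 by (intro sum_mono power_decreasing) auto
    then have "real N * l ^ N \<le> (\<Sum>k=1..N. l ^ k)" by simp
    then have "l ^ N \<le> cs N" using Nr by (simp add: cs_def field_simps)
    then show ?thesis using lN by (simp add: a_def)
  qed
  have b_le: "b \<le> 1/4"
  proof -
    have "(\<Sum>k=1..8*N. l ^ k) \<le> (\<Sum>k<Suc (8*N). l ^ k)"
      using l0 by (intro sum_mono2) auto
    also have "\<dots> = (1 - l ^ Suc (8*N)) / (1 - l)" using l by (subst sum_gp_strict) simp
    also have "\<dots> \<le> 1 / (1 - l)" using l l0 by (intro divide_right_mono) auto
    also have "\<dots> = 2 * real N" using Nr by (simp add: l_def)
    finally have "(\<Sum>k=1..8*N. l ^ k) \<le> 2 * real N" .
    then show ?thesis using Nr by (simp add: b_def cs_def field_simps)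
  qed
  have ab: "\<bar>a - b\<bar> \<ge> 1/4" using a_ge b_le by simp
  have err: "enn2real (fock_integral p \<alpha> m (\<lambda>z. of_real c * f z - g z)) \<le> (1/32) powr p * enn2real (fock_integral p \<alpha> m f)
        \<and> fock_integral p \<alpha> m (\<lambda>z. of_real c * f z - g z) < \<infinity>"
    if c: "c = cs n" and n: "n \<ge> N0" for c n
  proof
    have cfc: "continuous_on UNIV (\<lambda>z. of_real c * f z)" using cf by (intro continuous_intros)
    have "fock_integral p \<alpha> m (\<lambda>z. of_real c * f z - g z) \<le> ennreal (2 powr p) * (fock_integral p \<alpha> m (\<lambda>z. of_real c * f z) + fock_integral p \<alpha> m g)"
      by (rule fock_sub[OF cfc cg p0 m])
    also have "\<dots> < \<infinity>"
      using Ifin Gfin by (simp add: fock_scale[OF cf p0 m] ennreal_mult_less_top)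
    finally show fin: "fock_integral p \<alpha> m (\<lambda>z. of_real c * f z - g z) < \<infinity>" .
    have "fock_norm p \<alpha> m (\<lambda>z. cesaro_D n f z - P f z) \<le> 1/32 * fock_norm p \<alpha> m f" by (rule N0[OF n fsp])
    then have "enn2real (fock_integral p \<alpha> m (\<lambda>z. of_real c * f z - g z)) powr (1/p) \<le> 1/32 * enn2real (fock_integral p \<alpha> m f) powr (1/p)"
      by (simp add: fock_norm_def cesf c g_def)
    then show "enn2real (fock_integral p \<alpha> m (\<lambda>z. of_real c * f z - g z)) \<le> (1/32) powr p * enn2real (fock_integral p \<alpha> m f)"
      by (intro raise_p) (use p0 in auto)
  qed
  have nb: "N0 \<le> 8 * N" using NN0 by simp
  note ea = err[OF a_def NN0] and eb = err[OF b_def nb]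
  define IA where "IA = fock_integral p \<alpha> m (\<lambda>z. of_real a * f z - g z)"
  define IB where "IB = fock_integral p \<alpha> m (\<lambda>z. of_real b * f z - g z)"
  define I where "I = fock_integral p \<alpha> m f"
  have cA: "continuous_on UNIV (\<lambda>z. of_real a * f z - g z)" using cf cg by (intro continuous_intros)
  have cB: "continuous_on UNIV (\<lambda>z. of_real b * f z - g z)" using cf cg by (intro continuous_intros)
  have "fock_integral p \<alpha> m (\<lambda>z. (of_real a * f z - g z) - (of_real b * f z - g z)) \<le> ennreal (2 powr p) * (IA + IB)"
    unfolding IA_def IB_def by (rule fock_sub[OF cA cB p0 m])
  moreover have "fock_integral p \<alpha> m (\<lambda>z. (of_real a * f z - g z) - (of_real b * f z - g z)) = ennreal (\<bar>a - b\<bar> powr p) * I"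
  proof -
    have "(\<lambda>z. (of_real a * f z - g z) - (of_real b * f z - g z)) = (\<lambda>z. of_real (a - b) * f z)"
      by (rule ext) (simp add: algebra_simps)
    moreover have "cmod (of_real a - of_real b) = \<bar>a - b\<bar>" by (metis norm_of_real of_real_diff)
    ultimately show ?thesis unfolding I_def by (simp add: fock_scale[OF cf p0 m])
  qed
  ultimately have key: "ennreal (\<bar>a - b\<bar> powr p) * I \<le> ennreal (2 powr p) * (IA + IB)" by simp
  have IAf: "IA < \<infinity>" and IBf: "IB < \<infinity>" using ea eb by (auto simp: IA_def IB_def)
  have If: "I < \<infinity>" using Ifin by (simp add: I_def)
  have "enn2real (ennreal (\<bar>a - b\<bar> powr p) * I) \<le> enn2real (ennreal (2 powr p) * (IA + IB))"
    using key IAf IBf by (intro enn2real_mono) (auto simp: ennreal_mult_less_top)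
  then have "\<bar>a - b\<bar> powr p * enn2real I \<le> 2 powr p * (enn2real IA + enn2real IB)"
    using IAf IBf by (simp add: enn2real_mult enn2real_plus)
  also have "\<dots> \<le> 2 powr p * ((1/32) powr p * enn2real I + (1/32) powr p * enn2real I)"
    using ea eb by (intro mult_left_mono add_mono) (auto simp: IA_def IB_def I_def)
  also have "\<dots> = 2 * (1/16) powr p * enn2real I"
  proof -
    have "2 powr p * (1/32) powr p = (1/16) powr p" by (simp add: powr_mult[symmetric])
    then show ?thesis by (simp add: algebra_simps)
  qed
  finally have ineq: "\<bar>a - b\<bar> powr p * enn2real I \<le> 2 * (1/16) powr p * enn2real I" .
  have rI: "enn2real I > 0" using Ipos If by (simp add: I_def enn2real_positive_iff)
  have "(1/4) powr p \<le> \<bar>a - b\<bar> powr p" using ab p0 by (intro powr_mono2) auto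
  also have "\<dots> \<le> 2 * (1/16) powr p" using ineq rI by simp
  finally have "(1/4) powr p \<le> 2 * (1/16) powr p" .
  moreover have "(1/4) powr p = 4 powr p * (1/16) powr p" by (simp add: powr_mult[symmetric])
  moreover have "4 powr p \<ge> 4" using p powr_mono[of 1 p 4] by simp
  moreover have "(1/16) powr p > (0::real)" by simp
  ultimately have "4 * (1/16) powr p \<le> 4 powr p * (1/16) powr p" "4 powr p * (1/16) powr p \<le> 2 * ((1::real)/16) powr p"
    by (auto intro: mult_right_mono)
  then have "4 * (1/16) powr p \<le> 2 * ((1::real)/16) powr p" by linarith
  then show False using \<open>(1/16) powr p > (0::real)\<close> by simp
qed


theorem theorem1:
  fixes p \<alpha> m :: real
  assumes "1 \<le> p" and "\<alpha> > 0" and "m > 0"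
    and "D_bounded p \<alpha> m"
  shows "(D_power_bounded p \<alpha> m \<and> D_uniformly_mean_ergodic p \<alpha> m) \<longleftrightarrow>
         (m < 1 \<or> (m = 1 \<and> \<alpha> < 1))"
proof
  assume h: "D_power_bounded p \<alpha> m \<and> D_uniformly_mean_ergodic p \<alpha> m"
  show "m < 1 \<or> (m = 1 \<and> \<alpha> < 1)"
  proof (rule ccontr)
    assume "\<not> (m < 1 \<or> (m = 1 \<and> \<alpha> < 1))"
    then have bad: "1 < m \<or> (m = 1 \<and> 1 \<le> \<alpha>)" by auto
    have "\<not> D_uniformly_mean_ergodic p \<alpha> m"
    proof (rule not_ume[OF assms(1) assms(3)])
      fix l :: real assume l: "1/2 \<le> l" "l < 1"
      then have l0: "0 \<le> l" by simp
      show "(\<lambda>z. exp (of_real l * z)) \<in> fock_space p \<alpha> m \<and> fock_integral p \<alpha> m (\<lambda>z. exp (of_real l * z)) > 0"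
        using bad_exp_in_space[OF assms(1) assms(2) assms(3) bad l0 l(2)] by blast
    qed
    then show False using h by simp
  qed
next
  assume g: "m < 1 \<or> (m = 1 \<and> \<alpha> < 1)"
  then have m1: "m \<le> 1" and c: "m < 1 \<or> \<alpha> < 1" by auto
  show "D_power_bounded p \<alpha> m \<and> D_uniformly_mean_ergodic p \<alpha> m"
    by (rule good_direction[OF assms(1) assms(2) assms(3) m1 c])
qed

end
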